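(* Every $2$-tree $G$ has, for every vertex $v\in V(G)$, a $1$-perfect orientation in which $v$ is a sink (in particular every $2$-tree is $1$-perfectly orientable). Every hollowed $2$-tree is $1$-perfectly orientable, but each of its $1$-perfect orientations has no sink.
   Context: An orientation of $G$ is $1$-perfect if for every vertex the out-neighborhood is a clique in $G$; $G$ is $1$-perfectly orientable if it has one. A sink is a vertex of out-degree $0$. $2$-trees: $K_2$ is a $2$-tree, and adding to a $2$-tree a new vertex adjacent to exactly two adjacent vertices yields a $2$-tree; there are no others. Hollowed $2$-trees: every cycle of length at least $4$ is a hollowed $2$-tree, and adding to a hollowed $2$-tree a new vertex adjacent to exactly two adjacent vertices yields a hollowed $2$-tree; there are no others. *)

theory Defs
  imports Main
begin

text \<open>A finite simple graph is given by a vertex set V and a set E of edges,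
each edge being a two-element subset of V.\<close>

definition adj :: "'a set set \<Rightarrow> 'a \<Rightarrow> 'a \<Rightarrow> bool" where
  "adj E u v \<longleftrightarrow> {u, v} \<in> E \<and> u \<noteq> v"

inductive two_tree :: "'a set \<Rightarrow> 'a set set \<Rightarrow> bool" where
  K2: "a \<noteq> b \<Longrightarrow> two_tree {a, b} {{a, b}}"
| extend: "two_tree V E \<Longrightarrow> w \<notin> V \<Longrightarrow> u \<in> V \<Longrightarrow> v \<in> V \<Longrightarrow> adj E u v
    \<Longrightarrow> two_tree (insert w V) (E \<union> {{w, u}, {w, v}})"

definition cycle_edges :: "'a list \<Rightarrow> 'a set set" where
  "cycle_edges vs = {{vs ! i, vs ! ((i + 1) mod length vs)} | i. i < length vs}"

inductive hollowed_two_tree :: "'a set \<Rightarrow> 'a set set \<Rightarrow> bool" where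
  cycle: "distinct vs \<Longrightarrow> length vs \<ge> 4 \<Longrightarrow> hollowed_two_tree (set vs) (cycle_edges vs)"
| extend: "hollowed_two_tree V E \<Longrightarrow> w \<notin> V \<Longrightarrow> u \<in> V \<Longrightarrow> v \<in> V \<Longrightarrow> adj E u v
    \<Longrightarrow> hollowed_two_tree (insert w V) (E \<union> {{w, u}, {w, v}})"

definition orientation :: "'a set \<Rightarrow> 'a set set \<Rightarrow> ('a \<times> 'a) set \<Rightarrow> bool" where
  "orientation V E D \<longleftrightarrow>
     (\<forall>(u, v) \<in> D. adj E u v) \<and>
     (\<forall>u v. adj E u v \<longrightarrow> ((u, v) \<in> D \<longleftrightarrow> (v, u) \<notin> D))"

definition out_nbrs :: "('a \<times> 'a) set \<Rightarrow> 'a \<Rightarrow> 'a set" where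
  "out_nbrs D x = {y. (x, y) \<in> D}"

definition is_clique :: "'a set set \<Rightarrow> 'a set \<Rightarrow> bool" where
  "is_clique E S \<longleftrightarrow> (\<forall>u \<in> S. \<forall>v \<in> S. u \<noteq> v \<longrightarrow> adj E u v)"

definition one_perfect :: "'a set \<Rightarrow> 'a set set \<Rightarrow> ('a \<times> 'a) set \<Rightarrow> bool" where
  "one_perfect V E D \<longleftrightarrow> orientation V E D \<and> (\<forall>x \<in> V. is_clique E (out_nbrs D x))"

definition one_perfectly_orientable :: "'a set \<Rightarrow> 'a set set \<Rightarrow> bool" where
  "one_perfectly_orientable V E \<longleftrightarrow> (\<exists>D. one_perfect V E D)"

definition is_sink :: "'a set \<Rightarrow> ('a \<times> 'a) set \<Rightarrow> 'a \<Rightarrow> bool" where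
  "is_sink V D v \<longleftrightarrow> v \<in> V \<and> out_nbrs D v = {}"

end

theory Submission
  imports Defs
begin

lemma adj_sym: "adj E u v = adj E v u"
  by (auto simp: adj_def insert_commute)

lemma adj_mono: "E \<subseteq> E' \<Longrightarrow> adj E u v \<Longrightarrow> adj E' u v"
  by (auto simp: adj_def)

lemma clique_mono: "E \<subseteq> E' \<Longrightarrow> is_clique E S \<Longrightarrow> is_clique E' S"
  by (auto simp: is_clique_def adj_def)

lemma two_tree_edges: "two_tree V E \<Longrightarrow> \<forall>e\<in>E. e \<subseteq> V"
  by (induction rule: two_tree.induct) auto

lemma cyc_edges_sub: "distinct vs \<Longrightarrow> 4 \<le> length vs \<Longrightarrow> \<forall>e\<in>cycle_edges vs. e \<subseteq> set vs"
  by (auto simp: cycle_edges_def intro!: nth_mem mod_less_divisor)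

lemma hollowed_edges: "hollowed_two_tree V E \<Longrightarrow> \<forall>e\<in>E. e \<subseteq> V"
  by (induction rule: hollowed_two_tree.induct) (use cyc_edges_sub in auto)

lemma orient_D: "orientation V E D \<Longrightarrow> \<forall>e\<in>E. e\<subseteq>V \<Longrightarrow> (p,q)\<in>D \<Longrightarrow> p\<in>V \<and> q\<in>V \<and> p\<noteq>q"
  unfolding orientation_def adj_def by fastforce

lemma adj_ext: "adj (E \<union> {{w,a},{w,b}}) p q \<longleftrightarrow> adj E p q \<or> ((p=w\<and>q=a \<or> p=a\<and>q=w \<or> p=w\<and>q=b \<or> p=b\<and>q=w) \<and> p\<noteq>q)"
  by (auto simp: adj_def doubleton_eq_iff)

lemma adj_ext': "adj (insert {w,a} (insert {w,b} E)) p q \<longleftrightarrow> adj E p q \<or> ((p=w\<and>q=a \<or> p=a\<and>q=w \<or> p=w\<and>q=b \<or> p=b\<and>q=w) \<and> p\<noteq>q)"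
  using adj_ext[of E w a b p q] by simp

lemma ext_old:
  assumes op: "one_perfect V E D" and ed: "\<forall>e\<in>E. e\<subseteq>V" and w: "w\<notin>V"
    and a: "a\<in>V" and b: "b\<in>V" and ab: "adj E a b"
  shows "one_perfect (insert w V) (E \<union> {{w,a},{w,b}}) (D \<union> {(w,a),(w,b)})"
    and "\<forall>x\<in>V. out_nbrs (D \<union> {(w,a),(w,b)}) x = out_nbrs D x"
proof -
  have or: "orientation V E D" and cl: "\<forall>x\<in>V. is_clique E (out_nbrs D x)"
    using op by (auto simp: one_perfect_def)
  have DV: "\<And>p q. (p,q)\<in>D \<Longrightarrow> p\<in>V \<and> q\<in>V \<and> p\<noteq>q" using orient_D[OF or ed] by blast
  have aw: "a \<noteq> w" "b \<noteq> w" using a b w by auto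
  show o: "\<forall>x\<in>V. out_nbrs (D \<union> {(w,a),(w,b)}) x = out_nbrs D x"
    using w by (auto simp: out_nbrs_def)
  have "orientation (insert w V) (E \<union> {{w,a},{w,b}}) (D \<union> {(w,a),(w,b)})"
    unfolding orientation_def
  proof (intro conjI allI impI)
    show "\<forall>(u, v)\<in>D \<union> {(w, a), (w, b)}. adj (E \<union> {{w, a}, {w, b}}) u v"
      using or aw unfolding orientation_def by (auto simp: adj_ext adj_ext')
  next
    fix p q assume "adj (E \<union> {{w, a}, {w, b}}) p q"
    then consider "adj E p q" | "p=w\<and>q=a \<or> p=a\<and>q=w \<or> p=w\<and>q=b \<or> p=b\<and>q=w"
      by (auto simp: adj_ext adj_ext')
    then show "((p, q) \<in> D \<union> {(w, a), (w, b)}) = ((q, p) \<notin> D \<union> {(w, a), (w, b)})"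
    proof cases
      case 1
      then have "p \<in> V" "q\<in>V" using ed by (auto simp: adj_def)
      then show ?thesis using or 1 w unfolding orientation_def by auto
    next
      case 2 then show ?thesis using DV aw w by auto
    qed
  qed
  moreover have "\<forall>x\<in>insert w V. is_clique (E \<union> {{w,a},{w,b}}) (out_nbrs (D \<union> {(w,a),(w,b)}) x)"
  proof
    fix x assume x: "x \<in> insert w V"
    show "is_clique (E \<union> {{w,a},{w,b}}) (out_nbrs (D \<union> {(w,a),(w,b)}) x)"
    proof (cases "x = w")
      case True
      then have "out_nbrs (D \<union> {(w,a),(w,b)}) x = {a,b}" using DV w by (auto simp: out_nbrs_def)
      then show ?thesis using ab by (auto simp: is_clique_def adj_ext adj_ext' adj_sym)
    next
      case False
      then show ?thesis using o cl x clique_mono[of E "E \<union> {{w,a},{w,b}}"] by auto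
    qed
  qed
  ultimately show "one_perfect (insert w V) (E \<union> {{w,a},{w,b}}) (D \<union> {(w,a),(w,b)})"
    by (simp add: one_perfect_def)
qed

lemma ext_new1:
  assumes op: "one_perfect V E D" and ed: "\<forall>e\<in>E. e\<subseteq>V" and w: "w\<notin>V"
    and a: "a\<in>V" and b: "b\<in>V" and ab: "adj E a b"
    and oa: "out_nbrs D a = {}" and ob: "out_nbrs D b = {a}"
  shows "one_perfect (insert w V) (E \<union> {{w,a},{w,b}}) (D \<union> {(a,w),(b,w)})"
    and "out_nbrs (D \<union> {(a,w),(b,w)}) w = {}"
    and "out_nbrs (D \<union> {(a,w),(b,w)}) a = {w}"
proof -
  have or: "orientation V E D" and cl: "\<forall>x\<in>V. is_clique E (out_nbrs D x)"
    using op by (auto simp: one_perfect_def)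
  have DV: "\<And>p q. (p,q)\<in>D \<Longrightarrow> p\<in>V \<and> q\<in>V \<and> p\<noteq>q" using orient_D[OF or ed] by blast
  have aw: "a \<noteq> w" "b \<noteq> w" using a b w by auto
  have abn: "a \<noteq> b" using ab by (auto simp: adj_def)
  have o: "\<forall>x\<in>V-{a,b}. out_nbrs (D \<union> {(a,w),(b,w)}) x = out_nbrs D x"
    using w by (auto simp: out_nbrs_def)
  show ow: "out_nbrs (D \<union> {(a,w),(b,w)}) w = {}" using DV w aw by (auto simp: out_nbrs_def)
  show oa': "out_nbrs (D \<union> {(a,w),(b,w)}) a = {w}" using oa abn by (auto simp: out_nbrs_def)
  have ob': "out_nbrs (D \<union> {(a,w),(b,w)}) b = {a,w}" using ob abn by (auto simp: out_nbrs_def)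
  have "orientation (insert w V) (E \<union> {{w,a},{w,b}}) (D \<union> {(a,w),(b,w)})"
    unfolding orientation_def
  proof (intro conjI allI impI)
    show "\<forall>(u, v)\<in>D \<union> {(a,w),(b,w)}. adj (E \<union> {{w, a}, {w, b}}) u v"
      using or aw unfolding orientation_def by (auto simp: adj_ext adj_ext')
  next
    fix p q assume "adj (E \<union> {{w, a}, {w, b}}) p q"
    then consider "adj E p q" | "p=w\<and>q=a \<or> p=a\<and>q=w \<or> p=w\<and>q=b \<or> p=b\<and>q=w"
      by (auto simp: adj_ext adj_ext')
    then show "((p, q) \<in> D \<union> {(a,w),(b,w)}) = ((q, p) \<notin> D \<union> {(a,w),(b,w)})"
    proof cases
      case 1
      then have "p \<in> V" "q\<in>V" using ed by (auto simp: adj_def)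
      then show ?thesis using or 1 w unfolding orientation_def by auto
    next
      case 2 then show ?thesis using DV aw w by auto
    qed
  qed
  moreover have "\<forall>x\<in>insert w V. is_clique (E \<union> {{w,a},{w,b}}) (out_nbrs (D \<union> {(a,w),(b,w)}) x)"
  proof
    fix x assume x: "x \<in> insert w V"
    show "is_clique (E \<union> {{w,a},{w,b}}) (out_nbrs (D \<union> {(a,w),(b,w)}) x)"
    proof (cases "x \<in> V - {a,b}")
      case True
      then show ?thesis using o cl x clique_mono[of E "E \<union> {{w,a},{w,b}}"] by auto
    next
      case False
      then have "x = w \<or> x = a \<or> x = b" using x by auto
      then show ?thesis using ow oa' ob' aw by (auto simp: is_clique_def adj_ext adj_ext')
    qed
  qed
  ultimately show "one_perfect (insert w V) (E \<union> {{w,a},{w,b}}) (D \<union> {(a,w),(b,w)})"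
    by (simp add: one_perfect_def)
qed

lemma ext_new2:
  assumes op: "one_perfect V E D" and ed: "\<forall>e\<in>E. e\<subseteq>V" and w: "w\<notin>V"
    and a: "a\<in>V" and b: "b\<in>V" and ab: "adj E a b"
    and oa: "out_nbrs D a = {}" and ob: "out_nbrs D b = {a}"
  shows "one_perfect (insert w V) (E \<union> {{w,a},{w,b}}) (D \<union> {(w,a),(b,w)})"
    and "out_nbrs (D \<union> {(w,a),(b,w)}) a = {}"
    and "out_nbrs (D \<union> {(w,a),(b,w)}) w = {a}"
proof -
  have or: "orientation V E D" and cl: "\<forall>x\<in>V. is_clique E (out_nbrs D x)"
    using op by (auto simp: one_perfect_def)
  have DV: "\<And>p q. (p,q)\<in>D \<Longrightarrow> p\<in>V \<and> q\<in>V \<and> p\<noteq>q" using orient_D[OF or ed] by blast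
  have aw: "a \<noteq> w" "b \<noteq> w" using a b w by auto
  have abn: "a \<noteq> b" using ab by (auto simp: adj_def)
  have o: "\<forall>x\<in>V-{a,b}. out_nbrs (D \<union> {(w,a),(b,w)}) x = out_nbrs D x"
    using w by (auto simp: out_nbrs_def)
  show ow: "out_nbrs (D \<union> {(w,a),(b,w)}) w = {a}" using DV w aw by (auto simp: out_nbrs_def)
  show oa': "out_nbrs (D \<union> {(w,a),(b,w)}) a = {}" using oa abn aw by (auto simp: out_nbrs_def)
  have ob': "out_nbrs (D \<union> {(w,a),(b,w)}) b = {a,w}" using ob abn by (auto simp: out_nbrs_def)
  have "orientation (insert w V) (E \<union> {{w,a},{w,b}}) (D \<union> {(w,a),(b,w)})"
    unfolding orientation_def
  proof (intro conjI allI impI)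
    show "\<forall>(u, v)\<in>D \<union> {(w,a),(b,w)}. adj (E \<union> {{w, a}, {w, b}}) u v"
      using or aw unfolding orientation_def by (auto simp: adj_ext adj_ext')
  next
    fix p q assume "adj (E \<union> {{w, a}, {w, b}}) p q"
    then consider "adj E p q" | "p=w\<and>q=a \<or> p=a\<and>q=w \<or> p=w\<and>q=b \<or> p=b\<and>q=w"
      by (auto simp: adj_ext adj_ext')
    then show "((p, q) \<in> D \<union> {(w,a),(b,w)}) = ((q, p) \<notin> D \<union> {(w,a),(b,w)})"
    proof cases
      case 1
      then have "p \<in> V" "q\<in>V" using ed by (auto simp: adj_def)
      then show ?thesis using or 1 w unfolding orientation_def by auto
    next
      case 2 then show ?thesis using DV aw w abn by auto
    qed
  qed
  moreover have "\<forall>x\<in>insert w V. is_clique (E \<union> {{w,a},{w,b}}) (out_nbrs (D \<union> {(w,a),(b,w)}) x)"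
  proof
    fix x assume x: "x \<in> insert w V"
    show "is_clique (E \<union> {{w,a},{w,b}}) (out_nbrs (D \<union> {(w,a),(b,w)}) x)"
    proof (cases "x \<in> V - {a,b}")
      case True
      then show ?thesis using o cl x clique_mono[of E "E \<union> {{w,a},{w,b}}"] by auto
    next
      case False
      then have "x = w \<or> x = a \<or> x = b" using x by auto
      then show ?thesis using ow oa' ob' aw by (auto simp: is_clique_def adj_ext adj_ext')
    qed
  qed
  ultimately show "one_perfect (insert w V) (E \<union> {{w,a},{w,b}}) (D \<union> {(w,a),(b,w)})"
    by (simp add: one_perfect_def)
qed

lemma E_swap: "E \<union> {{w,a},{w,b}} = E \<union> {{w,b},{w,a}}" by auto

lemma two_tree_main:
  "two_tree V E \<Longrightarrow> adj E x y \<Longrightarrow> \<exists>D. one_perfect V E D \<and> out_nbrs D x = {} \<and> out_nbrs D y = {x}"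
proof (induction arbitrary: x y rule: two_tree.induct)
  case (K2 a b)
  then have xy: "x \<noteq> y" "{x,y} = {a,b}" by (auto simp: adj_def)
  have "one_perfect {a,b} {{a,b}} {(y,x)}"
    using xy unfolding one_perfect_def orientation_def is_clique_def out_nbrs_def adj_def
    by (auto simp: doubleton_eq_iff)
  moreover have "out_nbrs {(y,x)} x = {}" "out_nbrs {(y,x)} y = {x}" using xy by (auto simp: out_nbrs_def)
  ultimately show ?case by blast
next
  case (extend V E w a b)
  have ed: "\<forall>e\<in>E. e\<subseteq>V" using two_tree_edges[OF extend.hyps(1)] .
  have ba: "adj E b a" using extend.hyps(5) adj_sym by metis
  from extend.prems consider "adj E x y" | "x=w\<and>y=a" | "x=a\<and>y=w" | "x=w\<and>y=b" | "x=b\<and>y=w"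
    by (auto simp: adj_ext adj_ext')
  then show ?case
  proof cases
    case 1
    then obtain D where D: "one_perfect V E D" "out_nbrs D x = {}" "out_nbrs D y = {x}" using extend.IH by blast
    have "x \<in> V" "y \<in> V" using 1 ed by (auto simp: adj_def)
    then show ?thesis using ext_old[OF D(1) ed extend.hyps(2-5)] D by metis
  next
    case 2
    then obtain D where D: "one_perfect V E D" "out_nbrs D a = {}" "out_nbrs D b = {a}" using extend.IH extend.hyps(5) by blast
    show ?thesis using ext_new1[OF D(1) ed extend.hyps(2-5) D(2,3)] 2 by metis
  next
    case 3
    then obtain D where D: "one_perfect V E D" "out_nbrs D a = {}" "out_nbrs D b = {a}" using extend.IH extend.hyps(5) by blast
    show ?thesis using ext_new2[OF D(1) ed extend.hyps(2-5) D(2,3)] 3 by metis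
  next
    case 4
    then obtain D where D: "one_perfect V E D" "out_nbrs D b = {}" "out_nbrs D a = {b}" using extend.IH ba by blast
    show ?thesis using ext_new1[OF D(1) ed extend.hyps(2) extend.hyps(4) extend.hyps(3) ba D(2,3)] 4 E_swap by metis
  next
    case 5
    then obtain D where D: "one_perfect V E D" "out_nbrs D b = {}" "out_nbrs D a = {b}" using extend.IH ba by blast
    show ?thesis using ext_new2[OF D(1) ed extend.hyps(2) extend.hyps(4) extend.hyps(3) ba D(2,3)] 5 E_swap by metis
  qed
qed

lemma two_tree_vert: "two_tree V E \<Longrightarrow> v \<in> V \<Longrightarrow> \<exists>u. adj E v u"
proof (induction rule: two_tree.induct)
  case (K2 a b)
  then show ?case by (auto simp: adj_def insert_commute)
next
  case (extend V E w a b)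
  show ?case
  proof (cases "v = w")
    case True
    have "w \<noteq> a" using extend.hyps by auto
    then show ?thesis using True by (intro exI[of _ a]) (auto simp: adj_def)
  next
    case False
    then show ?thesis using extend adj_mono[of E "E \<union> {{w,a},{w,b}}"] by auto
  qed
qed

lemma two_tree_ne: "two_tree V E \<Longrightarrow> V \<noteq> {}"
  by (induction rule: two_tree.induct) auto

lemma part1: "two_tree V E \<Longrightarrow> (\<forall>v \<in> V. \<exists>D. one_perfect V E D \<and> is_sink V D v) \<and> one_perfectly_orientable V E"
proof -
  assume t: "two_tree V E"
  have s: "\<forall>v \<in> V. \<exists>D. one_perfect V E D \<and> is_sink V D v"
  proof
    fix v assume v: "v \<in> V"
    obtain u where "adj E v u" using two_tree_vert[OF t v] by blast
    then show "\<exists>D. one_perfect V E D \<and> is_sink V D v" using two_tree_main[OF t] v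
      by (metis is_sink_def)
  qed
  moreover obtain v where "v \<in> V" using two_tree_ne[OF t] by blast
  ultimately show ?thesis using s unfolding one_perfectly_orientable_def by blast
qed

lemma arith4: "(n::nat) \<ge> 4 \<Longrightarrow> j < n \<Longrightarrow> l < n \<Longrightarrow> j' = (if Suc j = n then 0 else Suc j) \<Longrightarrow> k = (if Suc j' = n then 0 else Suc j') \<Longrightarrow> m = (if Suc l = n then 0 else Suc l) \<Longrightarrow> (j = l \<and> k = m \<or> k = l \<and> j = m) \<Longrightarrow> False"
  by (auto split: if_split_asm)

lemma modS: "i < (n::nat) \<Longrightarrow> Suc i mod n = (if Suc i = n then 0 else Suc i)"
  by (simp add: mod_Suc)

lemma adj_cyc: "adj (cycle_edges vs) x y \<longleftrightarrow>
   (\<exists>l<length vs. (x = vs!l \<and> y = vs!(Suc l mod length vs) \<or> y = vs!l \<and> x = vs!(Suc l mod length vs))) \<and> x \<noteq> y"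
  by (auto simp: adj_def cycle_edges_def doubleton_eq_iff)

lemma C1:
  assumes "distinct vs" "4 \<le> length vs" "i < length vs"
  shows "adj (cycle_edges vs) (vs!i) (vs!(Suc i mod length vs))"
proof -
  have l: "Suc i mod length vs < length vs" using assms by (auto intro!: mod_less_divisor)
  have "i \<noteq> Suc i mod length vs" using assms modS[of i "length vs"] by auto
  then have "vs!i \<noteq> vs!(Suc i mod length vs)" using assms l nth_eq_iff_index_eq by metis
  then show ?thesis using assms by (auto simp: adj_cyc)
qed

lemma C2:
  assumes d: "distinct vs" and n4: "4 \<le> length vs" and j: "j < length vs"
  shows "vs!j \<noteq> vs!(Suc (Suc j mod length vs) mod length vs)"
    and "\<not> adj (cycle_edges vs) (vs!j) (vs!(Suc (Suc j mod length vs) mod length vs))"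
proof -
  define n where "n = length vs"
  define j' where "j' = Suc j mod n"
  define k where "k = Suc j' mod n"
  have j': "j' < n" and k: "k < n" using j n4 by (auto simp: n_def j'_def k_def intro!: mod_less_divisor)
  have j'e: "j' = (if Suc j = n then 0 else Suc j)" using modS[of j n] j n_def j'_def by auto
  have ke: "k = (if Suc j' = n then 0 else Suc j')" using modS[of j' n] j' k_def by auto
  have "j \<noteq> k" using j'e ke n4 j n_def by auto
  then show "vs!j \<noteq> vs!(Suc (Suc j mod length vs) mod length vs)"
    using d j k nth_eq_iff_index_eq unfolding n_def j'_def k_def by metis
  show "\<not> adj (cycle_edges vs) (vs!j) (vs!(Suc (Suc j mod length vs) mod length vs))"
  proof
    assume "adj (cycle_edges vs) (vs!j) (vs!(Suc (Suc j mod length vs) mod length vs))"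
    then obtain l where l: "l < n" and
      h: "vs!j = vs!l \<and> vs!k = vs!(Suc l mod n) \<or> vs!k = vs!l \<and> vs!j = vs!(Suc l mod n)"
      unfolding adj_cyc n_def j'_def k_def by blast
    have sl: "Suc l mod n < n" using l by auto
    have le: "Suc l mod n = (if Suc l = n then 0 else Suc l)" using modS[of l n] l by auto
    from h have "j = l \<and> k = Suc l mod n \<or> k = l \<and> j = Suc l mod n"
      using d j k l sl nth_eq_iff_index_eq unfolding n_def by metis
    moreover obtain m where m: "m = Suc l mod n" by blast
    ultimately have "j = l \<and> k = m \<or> k = l \<and> j = m" "m = (if Suc l = n then 0 else Suc l)"
      using le by auto
    then show False using arith4[of n j l j' k m] j'e ke n4 j l n_def by blast
  qed
qed

lemma cyc_nosink:
  assumes d: "distinct vs" and n4: "4 \<le> length vs"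
    and op: "one_perfect (set vs) (cycle_edges vs) D" and i: "i < length vs"
    and s: "out_nbrs D (vs!i) = {}"
  shows False
proof -
  define n where "n = length vs"
  have or: "orientation (set vs) (cycle_edges vs) D"
    and cl: "\<forall>x\<in>set vs. is_clique (cycle_edges vs) (out_nbrs D x)"
    using op by (auto simp: one_perfect_def)
  have orr: "\<And>p q. adj (cycle_edges vs) p q \<Longrightarrow> ((p, q) \<in> D) = ((q, p) \<notin> D)"
    using or unfolding orientation_def by blast
  define f where "f k = (i + k) mod n" for k
  have fS: "f (Suc k) = Suc (f k) mod n" for k unfolding f_def by (simp add: mod_Suc_eq)
  have fl: "f k < n" for k unfolding f_def using i n_def by (auto intro!: mod_less_divisor)
  have claim: "k < n \<Longrightarrow> (vs!(f (Suc k)), vs!(f k)) \<in> D" for k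
  proof (induction k)
    case 0
    have f0: "f 0 = i" using i n_def f_def by auto
    have a: "adj (cycle_edges vs) (vs!(f 0)) (vs!(f (Suc 0)))"
      using C1[OF d n4 i] f0 fS n_def by simp
    have "(vs!(f 0), vs!(f (Suc 0))) \<notin> D" using s f0 by (auto simp: out_nbrs_def)
    then show ?case using orr[OF a] by blast
  next
    case (Suc k)
    then have IH: "(vs!(Suc (f k) mod n), vs!(f k)) \<in> D" using fS by simp
    define j where "j = f k"
    have j: "j < n" using fl j_def by auto
    have a: "adj (cycle_edges vs) (vs!(Suc j mod n)) (vs!(Suc (Suc j mod n) mod n))"
    proof -
      have "Suc j mod n < n" by (rule mod_less_divisor) (use j in auto)
      then show ?thesis using C1[OF d n4, of "Suc j mod n"] unfolding n_def by blast
    qed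
    have c2: "vs!j \<noteq> vs!(Suc (Suc j mod n) mod n)"
      "\<not> adj (cycle_edges vs) (vs!j) (vs!(Suc (Suc j mod n) mod n))"
      using C2[OF d n4, of j] j n_def by auto
    have "(vs!(Suc j mod n), vs!(Suc (Suc j mod n) mod n)) \<notin> D"
    proof
      assume h: "(vs!(Suc j mod n), vs!(Suc (Suc j mod n) mod n)) \<in> D"
      have "vs!(Suc j mod n) \<in> set vs" using j n_def by (auto intro!: nth_mem mod_less_divisor)
      then have "is_clique (cycle_edges vs) (out_nbrs D (vs!(Suc j mod n)))" using cl by blast
      then show False using h IH c2 j_def unfolding is_clique_def out_nbrs_def by blast
    qed
    then have "(vs!(Suc (Suc j mod n) mod n), vs!(Suc j mod n)) \<in> D" using orr[OF a] by blast
    then show ?case using fS j_def by simp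
  qed
  have "(vs!(f n), vs!(f (n - 1))) \<in> D" using claim[of "n - 1"] n4 n_def
    by (metis Suc_pred' diff_less le_trans less_numeral_extra(1) zero_less_numeral less_le_trans)
  moreover have "f n = i" using i n_def f_def by auto
  ultimately show False using s by (auto simp: out_nbrs_def)
qed

lemma cyc_orientable:
  assumes d: "distinct vs" and n4: "4 \<le> length vs"
  shows "one_perfectly_orientable (set vs) (cycle_edges vs)"
proof -
  define n where "n = length vs"
  define D where "D = {(vs!l, vs!(Suc l mod n)) | l. l < n}"
  have ml: "Suc l mod n < n" for l by (rule mod_less_divisor) (use n4 n_def in auto)
  have rev: "(vs!(Suc l mod n), vs!l) \<notin> D" if l: "l < n" for l
  proof
    assume "(vs!(Suc l mod n), vs!l) \<in> D"
    then obtain m where m: "m < n" "vs!(Suc l mod n) = vs!m" "vs!l = vs!(Suc m mod n)"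
      unfolding D_def by blast
    have "m = Suc l mod n" "l = Suc m mod n" using m d l ml nth_eq_iff_index_eq unfolding n_def by metis+
    then have "vs!l = vs!(Suc (Suc l mod n) mod n)" by simp
    then show False using C2(1)[OF d n4, of l] l n_def by simp
  qed
  have "orientation (set vs) (cycle_edges vs) D"
    unfolding orientation_def
  proof (intro conjI allI impI)
    show "\<forall>(u, v)\<in>D. adj (cycle_edges vs) u v" using C1[OF d n4] unfolding D_def n_def by auto
  next
    fix p q assume "adj (cycle_edges vs) p q"
    then obtain l where l: "l < n" and
      h: "p = vs!l \<and> q = vs!(Suc l mod n) \<or> q = vs!l \<and> p = vs!(Suc l mod n)"
      unfolding adj_cyc n_def by blast
    have "(vs!l, vs!(Suc l mod n)) \<in> D" using l unfolding D_def by blast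
    then show "((p, q) \<in> D) = ((q, p) \<notin> D)" using h rev[OF l] by auto
  qed
  moreover have "\<forall>x\<in>set vs. is_clique (cycle_edges vs) (out_nbrs D x)"
  proof (intro ballI)
    fix x assume "x \<in> set vs"
    have "y = z" if yz: "(x,y) \<in> D" "(x,z) \<in> D" for y z
    proof -
      obtain l m where "l < n" "m < n" "x = vs!l" "y = vs!(Suc l mod n)" "x = vs!m" "z = vs!(Suc m mod n)"
        using yz unfolding D_def by blast
      then have "l = m" using d nth_eq_iff_index_eq unfolding n_def by metis
      then show ?thesis using \<open>y = _\<close> \<open>z = _\<close> by simp
    qed
    then show "is_clique (cycle_edges vs) (out_nbrs D x)"
      unfolding is_clique_def out_nbrs_def by blast
  qed
  ultimately show ?thesis unfolding one_perfectly_orientable_def one_perfect_def by blast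
qed

lemma restrict:
  assumes op: "one_perfect (insert w V) (E \<union> {{w,a},{w,b}}) D" and ed: "\<forall>e\<in>E. e\<subseteq>V"
    and w: "w \<notin> V"
  shows "one_perfect V E (D \<inter> V \<times> V)"
proof -
  have or: "orientation (insert w V) (E \<union> {{w,a},{w,b}}) D"
    and cl: "\<forall>x\<in>insert w V. is_clique (E \<union> {{w,a},{w,b}}) (out_nbrs D x)"
    using op by (auto simp: one_perfect_def)
  have aV: "\<And>p q. p \<in> V \<Longrightarrow> q \<in> V \<Longrightarrow> adj (E \<union> {{w,a},{w,b}}) p q = adj E p q"
    using w by (auto simp: adj_ext adj_ext')
  have aV2: "\<And>p q. p \<in> V \<Longrightarrow> q \<in> V \<Longrightarrow> adj (insert {w,a} (insert {w,b} E)) p q = adj E p q"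
    using w by (auto simp: adj_ext adj_ext')
  have "orientation V E (D \<inter> V \<times> V)"
    unfolding orientation_def
  proof (intro conjI allI impI)
    show "\<forall>(u, v)\<in>D \<inter> V \<times> V. adj E u v" using or aV unfolding orientation_def by auto
  next
    fix p q assume a: "adj E p q"
    then have "p \<in> V" "q \<in> V" using ed by (auto simp: adj_def)
    then show "((p, q) \<in> D \<inter> V \<times> V) = ((q, p) \<notin> D \<inter> V \<times> V)"
      using or a aV unfolding orientation_def by auto
  qed
  moreover have "\<forall>x\<in>V. is_clique E (out_nbrs (D \<inter> V \<times> V) x)"
  proof (intro ballI)
    fix x assume x: "x \<in> V"
    show "is_clique E (out_nbrs (D \<inter> V \<times> V) x)"
      unfolding is_clique_def
    proof (intro ballI impI)
      fix u v assume u: "u \<in> out_nbrs (D \<inter> V \<times> V) x" and v: "v \<in> out_nbrs (D \<inter> V \<times> V) x" and uv: "u \<noteq> v"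
      have "is_clique (E \<union> {{w,a},{w,b}}) (out_nbrs D x)" using cl x by blast
      then have "adj (E \<union> {{w,a},{w,b}}) u v" using u v uv unfolding is_clique_def out_nbrs_def by blast
      moreover have "u \<in> V" "v \<in> V" using u v by (auto simp: out_nbrs_def)
      ultimately show "adj E u v" using aV by blast
    qed
  qed
  ultimately show ?thesis by (simp add: one_perfect_def)
qed

lemma hollowed_orientable: "hollowed_two_tree V E \<Longrightarrow> one_perfectly_orientable V E"
proof (induction rule: hollowed_two_tree.induct)
  case (cycle vs)
  then show ?case using cyc_orientable by blast
next
  case (extend V E w u v)
  then obtain D where "one_perfect V E D" unfolding one_perfectly_orientable_def by blast
  then show ?case using ext_old(1)[OF _ hollowed_edges[OF extend.hyps(1)] extend.hyps(2-5)]
    unfolding one_perfectly_orientable_def by blast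
qed

lemma hollowed_nosink: "hollowed_two_tree V E \<Longrightarrow> one_perfect V E D \<Longrightarrow> is_sink V D v \<Longrightarrow> False"
proof (induction arbitrary: D v rule: hollowed_two_tree.induct)
  case (cycle vs)
  then obtain i where "i < length vs" "v = vs!i" by (auto simp: is_sink_def in_set_conv_nth)
  then show ?case using cyc_nosink[OF cycle.hyps cycle.prems(1)] cycle.prems(2) by (auto simp: is_sink_def)
next
  case (extend V E w a b)
  have ed: "\<forall>e\<in>E. e\<subseteq>V" using hollowed_edges[OF extend.hyps(1)] .
  have or: "orientation (insert w V) (E \<union> {{w,a},{w,b}}) D"
    and cl: "\<forall>x\<in>insert w V. is_clique (E \<union> {{w,a},{w,b}}) (out_nbrs D x)"
    using extend.prems by (auto simp: one_perfect_def)
  have DV: "\<And>p q. (p,q)\<in>D \<Longrightarrow> p\<in>insert w V \<and> q\<in>insert w V \<and> p\<noteq>q"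
  proof -
    have "\<forall>e\<in>E \<union> {{w,a},{w,b}}. e \<subseteq> insert w V" using ed extend.hyps(3,4) by auto
    then show "\<And>p q. (p,q)\<in>D \<Longrightarrow> p\<in>insert w V \<and> q\<in>insert w V \<and> p\<noteq>q"
      using orient_D[OF or] by blast
  qed
  have r: "one_perfect V E (D \<inter> V \<times> V)" using restrict[OF extend.prems(1) ed extend.hyps(2)] .
  have ns: "\<exists>y\<in>V. (x,y) \<in> D" if "x \<in> V" for x
  proof (rule ccontr)
    assume "\<not> ?thesis"
    then have "is_sink V (D \<inter> V \<times> V) x" using that by (auto simp: is_sink_def out_nbrs_def)
    then show False using extend.IH r by blast
  qed
  have vw: "v = w"
  proof (rule ccontr)
    assume "v \<noteq> w"
    then have "v \<in> V" using extend.prems(2) by (auto simp: is_sink_def)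
    then show False using ns extend.prems(2) by (auto simp: is_sink_def out_nbrs_def)
  qed
  have aw: "a \<noteq> w" "b \<noteq> w" using extend.hyps by auto
  have orr: "\<And>p q. adj (E \<union> {{w,a},{w,b}}) p q \<Longrightarrow> ((p, q) \<in> D) = ((q, p) \<notin> D)"
    using or unfolding orientation_def by blast
  have key: "(x, y) \<in> D" if x: "x \<in> V" "x = a \<and> y = b \<or> x = b \<and> y = a" for x y
  proof -
    have "adj (E \<union> {{w,a},{w,b}}) x w" using x aw by (auto simp: adj_def insert_commute)
    moreover have "(w, x) \<notin> D" using extend.prems(2) vw by (auto simp: is_sink_def out_nbrs_def)
    ultimately have xw: "(x, w) \<in> D" using orr by blast
    obtain z where z: "z \<in> V" "(x, z) \<in> D" using ns x by blast
    have "z \<noteq> w" using z extend.hyps(2) by auto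
    then have "adj (E \<union> {{w,a},{w,b}}) z w" using cl xw z x(1)
      unfolding is_clique_def out_nbrs_def by blast
    then have "adj E z w \<or> z = a \<or> z = b" by (auto simp: adj_def doubleton_eq_iff)
    moreover have "\<not> adj E z w" using ed extend.hyps(2) by (auto simp: adj_def)
    moreover have "z \<noteq> x" using DV z by blast
    ultimately show ?thesis using z x by auto
  qed
  have "(a, b) \<in> D" "(b, a) \<in> D" using key extend.hyps(3,4) by auto
  moreover have "adj (E \<union> {{w,a},{w,b}}) a b" using extend.hyps(5) by (auto simp: adj_def)
  ultimately show False using orr by blast
qed

theorem lemma4p2:
  shows "(\<forall>(V :: 'a set) E. two_tree V E \<longrightarrow>
            (\<forall>v \<in> V. \<exists>D. one_perfect V E D \<and> is_sink V D v) \<and>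
            one_perfectly_orientable V E)
       \<and> (\<forall>(V :: 'a set) E. hollowed_two_tree V E \<longrightarrow>
            one_perfectly_orientable V E \<and>
            (\<forall>D. one_perfect V E D \<longrightarrow> \<not> (\<exists>v. is_sink V D v)))"
proof
  show "\<forall>(V :: 'a set) E. two_tree V E \<longrightarrow>
            (\<forall>v \<in> V. \<exists>D. one_perfect V E D \<and> is_sink V D v) \<and>
            one_perfectly_orientable V E" using part1 by blast
  show "\<forall>(V :: 'a set) E. hollowed_two_tree V E \<longrightarrow>
            one_perfectly_orientable V E \<and>
            (\<forall>D. one_perfect V E D \<longrightarrow> \<not> (\<exists>v. is_sink V D v))"
  proof (intro allI impI conjI)
    fix V :: "'a set" and E D assume h: "hollowed_two_tree V E"
    show "one_perfectly_orientable V E" using hollowed_orientable[OF h] .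
    assume op: "one_perfect V E D"
    show "\<not> (\<exists>v. is_sink V D v)" using hollowed_nosink[OF h op] by blast
  qed
qed

end
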